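(* Fix a phylogenetic model of $k$-state character change on leaf-labelled trees (for instance any of the CFN, JC, K2P or K3P models). Let $T_1,T_2,T_3,T_4$ be $n$-taxon trees on the taxon set $[n]$, not necessarily distinct, and let $K\subseteq[n]$. If $V_{T_1|_K}\ast V_{T_2|_K}\not\subseteq V_{T_3|_K}\ast V_{T_4|_K}$, then $V_{T_1}\ast V_{T_2}\not\subseteq V_{T_3}\ast V_{T_4}$.
   Context: Taxa are labelled by $[n]=\{1,\dots,n\}$. For each leaf-labelled tree $T$ the model has a polynomial parameterization map $\psi_T$ sending continuous (stochastic) parameters to the joint distribution of states at the leaves, a vector in $\mathbb{C}^{k^n}$; extending $\psi_T$ to complex parameters, $V_T\subseteq\mathbb{P}^{k^n-1}$ denotes the Zariski closure of its image. For $K\subseteq[n]$, $T|_K$ is the induced subtree of $T$ with leaf set $K$; marginalization of a distribution onto the leaves in $K$ is a linear map $\mathbb{C}^{k^n}\to\mathbb{C}^{k^{|K|}}$ which, for the models considered, sends $V_T$ to $V_{T|_K}$. For varieties $V,W$ in projective space, the join $V\ast W$ is the Zariski closure of the union of all lines meeting both $V$ and $W$ (equivalently the closure of the set of all mixtures $\pi p+(1-\pi)p'$ with $p\in V$, $p'\in W$); when $V=W$ it is the secant variety. *)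

theory Defs
  imports Complex_Main
begin

text \<open>Joint distributions of k-state characters at the leaves in a leaf set L are
  points p :: (nat => nat) => complex; coordinates are indexed by the state
  assignments sigma with sigma i < k for i in L and sigma i = 0 for i outside L
  (k^|L| coordinates).\<close>

definition assign :: "nat \<Rightarrow> nat set \<Rightarrow> (nat \<Rightarrow> nat) set" where
  "assign k L = {\<sigma>. (\<forall>i\<in>L. \<sigma> i < k) \<and> (\<forall>i. i \<notin> L \<longrightarrow> \<sigma> i = 0)}"

definition dist_space :: "nat \<Rightarrow> nat set \<Rightarrow> ((nat \<Rightarrow> nat) \<Rightarrow> complex) set" where
  "dist_space k L = {p. \<forall>\<sigma>. \<sigma> \<notin> assign k L \<longrightarrow> p \<sigma> = 0}"

inductive polyfun :: "'a set \<Rightarrow> (('a \<Rightarrow> complex) \<Rightarrow> complex) \<Rightarrow> bool" for I where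
  pf_const: "polyfun I (\<lambda>p. c)"
| pf_coord: "x \<in> I \<Longrightarrow> polyfun I (\<lambda>p. p x)"
| pf_add: "polyfun I f \<Longrightarrow> polyfun I g \<Longrightarrow> polyfun I (\<lambda>p. f p + g p)"
| pf_mult: "polyfun I f \<Longrightarrow> polyfun I g \<Longrightarrow> polyfun I (\<lambda>p. f p * g p)"

definition zclosure :: "nat \<Rightarrow> nat set \<Rightarrow> ((nat \<Rightarrow> nat) \<Rightarrow> complex) set
    \<Rightarrow> ((nat \<Rightarrow> nat) \<Rightarrow> complex) set" where
  "zclosure k L S = {p \<in> dist_space k L. \<forall>f. polyfun (assign k L) f \<and> (\<forall>q\<in>S. f q = 0) \<longrightarrow> f p = 0}"

definition join :: "nat \<Rightarrow> nat set \<Rightarrow> ((nat \<Rightarrow> nat) \<Rightarrow> complex) set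
    \<Rightarrow> ((nat \<Rightarrow> nat) \<Rightarrow> complex) set \<Rightarrow> ((nat \<Rightarrow> nat) \<Rightarrow> complex) set" where
  "join k L V W = zclosure k L
     {(\<lambda>\<sigma>. \<pi> * p \<sigma> + (1 - \<pi>) * q \<sigma>) | \<pi> p q. p \<in> V \<and> q \<in> W}"

definition marg :: "nat \<Rightarrow> nat set \<Rightarrow> nat set \<Rightarrow> ((nat \<Rightarrow> nat) \<Rightarrow> complex)
    \<Rightarrow> ((nat \<Rightarrow> nat) \<Rightarrow> complex)" where
  "marg k L K p = (\<lambda>\<sigma>. if \<sigma> \<in> assign k K
      then (\<Sum>\<tau>\<in>{\<tau> \<in> assign k L. \<forall>i\<in>K. \<tau> i = \<sigma> i}. p \<tau>) else 0)"

definition model_variety :: "nat \<Rightarrow> ('t \<Rightarrow> nat set) \<Rightarrow> ('t \<Rightarrow> 'p \<Rightarrow> ((nat \<Rightarrow> nat) \<Rightarrow> complex))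
    \<Rightarrow> ('t \<Rightarrow> 'p set) \<Rightarrow> 't \<Rightarrow> ((nat \<Rightarrow> nat) \<Rightarrow> complex) set" where
  "model_variety k leaves psi \<Theta> T = zclosure k (leaves T) (psi T ` \<Theta> T)"

end

theory Submission
  imports Defs
begin

lemma pf_sum: assumes "S \<subseteq> I" shows "polyfun I (\<lambda>p. \<Sum>\<tau>\<in>S. p \<tau>)"
proof (cases "finite S")
  case True
  show ?thesis using True assms
  proof (induction S rule: finite_induct)
    case empty then show ?case by (simp add: polyfun.pf_const)
  next
    case (insert x F)
    then show ?case by (simp add: polyfun.pf_add polyfun.pf_coord)
  qed
next
  case False then show ?thesis by (simp add: polyfun.pf_const)
qed

lemma pf_marg:
  assumes "polyfun (assign k K) f"
  shows "polyfun (assign k L) (\<lambda>p. f (marg k L K p))"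
  using assms
proof (induction rule: polyfun.induct)
  case (pf_const c) then show ?case by (rule polyfun.pf_const)
next
  case (pf_coord x)
  have "polyfun (assign k L) (\<lambda>p. \<Sum>\<tau>\<in>{\<tau> \<in> assign k L. \<forall>i\<in>K. \<tau> i = x i}. p \<tau>)"
    by (rule pf_sum) auto
  then show ?case using pf_coord by (simp add: marg_def)
next
  case (pf_add f g) then show ?case by (simp add: polyfun.pf_add)
next
  case (pf_mult f g) then show ?case by (simp add: polyfun.pf_mult)
qed

lemma pf_aff:
  assumes "polyfun I f"
  shows "polyfun I (\<lambda>p. f (\<lambda>\<sigma>. a * p \<sigma> + b \<sigma>))"
  using assms
proof (induction rule: polyfun.induct)
  case (pf_const c) then show ?case by (rule polyfun.pf_const)
next
  case (pf_coord x)
  then show ?case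
    by (intro polyfun.pf_add polyfun.pf_mult polyfun.pf_const polyfun.pf_coord)
next
  case (pf_add f g) then show ?case by (simp add: polyfun.pf_add)
next
  case (pf_mult f g) then show ?case by (simp add: polyfun.pf_mult)
qed

lemma zimage:
  assumes pf: "\<And>f. polyfun (assign k K) f \<Longrightarrow> polyfun (assign k L) (\<lambda>p. f (g p))"
    and ds: "\<And>p. p \<in> dist_space k L \<Longrightarrow> g p \<in> dist_space k K"
    and p: "p \<in> zclosure k L S"
  shows "g p \<in> zclosure k K (g ` S)"
  using p pf ds unfolding zclosure_def by auto

lemma zsub:
  assumes "S \<subseteq> zclosure k K S'"
  shows "zclosure k K S \<subseteq> zclosure k K S'"
  using assms unfolding zclosure_def by blast

lemma zmono: "S \<subseteq> S' \<Longrightarrow> zclosure k K S \<subseteq> zclosure k K S'"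
  unfolding zclosure_def by blast

lemma zincl: "S \<subseteq> dist_space k K \<Longrightarrow> S \<subseteq> zclosure k K S"
  unfolding zclosure_def by blast

lemma zds: "zclosure k K S \<subseteq> dist_space k K"
  unfolding zclosure_def by blast

lemma marg_ds: "marg k L K p \<in> dist_space k K"
  unfolding marg_def dist_space_def by auto

lemma marg_lin: "marg k L K (\<lambda>\<sigma>. a * p \<sigma> + b * q \<sigma>) = (\<lambda>\<sigma>. a * marg k L K p \<sigma> + b * marg k L K q \<sigma>)"
  unfolding marg_def by (auto simp: sum.distrib sum_distrib_left)

theorem lemma1:
  fixes k n :: nat
    and leaves :: "'t \<Rightarrow> nat set"
    and restr :: "'t \<Rightarrow> nat set \<Rightarrow> 't"
    and psi :: "'t \<Rightarrow> 'p \<Rightarrow> ((nat \<Rightarrow> nat) \<Rightarrow> complex)"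
    and \<Theta> :: "'t \<Rightarrow> 'p set"
    and T1 T2 T3 T4 :: 't
    and K :: "nat set"
  assumes model_restr: "\<And>T K'. leaves T = {1..n} \<Longrightarrow> K' \<subseteq> {1..n} \<Longrightarrow>
      leaves (restr T K') = K'"
    and model_marg: "\<And>T K'. leaves T = {1..n} \<Longrightarrow> K' \<subseteq> {1..n} \<Longrightarrow>
      zclosure k K' (marg k {1..n} K' ` model_variety k leaves psi \<Theta> T)
        = model_variety k leaves psi \<Theta> (restr T K')"
    and trees: "leaves T1 = {1..n}" "leaves T2 = {1..n}" "leaves T3 = {1..n}" "leaves T4 = {1..n}"
    and K: "K \<subseteq> {1..n}"
    and notsub: "\<not> join k K (model_variety k leaves psi \<Theta> (restr T1 K)) (model_variety k leaves psi \<Theta> (restr T2 K))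
        \<subseteq> join k K (model_variety k leaves psi \<Theta> (restr T3 K)) (model_variety k leaves psi \<Theta> (restr T4 K))"
  shows "\<not> join k {1..n} (model_variety k leaves psi \<Theta> T1) (model_variety k leaves psi \<Theta> T2)
        \<subseteq> join k {1..n} (model_variety k leaves psi \<Theta> T3) (model_variety k leaves psi \<Theta> T4)"
proof
  assume sub: "join k {1..n} (model_variety k leaves psi \<Theta> T1) (model_variety k leaves psi \<Theta> T2)
        \<subseteq> join k {1..n} (model_variety k leaves psi \<Theta> T3) (model_variety k leaves psi \<Theta> T4)"
  define L where "L = {1..n::nat}"
  define V where "V = (\<lambda>T. model_variety k leaves psi \<Theta> T)"
  define m where "m = marg k L K"
  define mix where "mix = (\<lambda>\<pi> (p::(nat \<Rightarrow> nat) \<Rightarrow> complex) q. (\<lambda>\<sigma>. \<pi> * p \<sigma> + (1 - \<pi>) * q \<sigma>))"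
  define M where "M = (\<lambda>A B. {mix \<pi> p q | \<pi> p q. p \<in> A \<and> q \<in> B})"
  have joinM: "\<And>J A B. join k J A B = zclosure k J (M A B)"
    unfolding join_def M_def mix_def by simp
  have W: "\<And>T. leaves T = L \<Longrightarrow> V (restr T K) = zclosure k K (m ` V T)"
    using model_marg K unfolding V_def m_def L_def by metis
  define C where "C = zclosure k K (M (V (restr T3 K)) (V (restr T4 K)))"
  have pfm: "\<And>f. polyfun (assign k K) f \<Longrightarrow> polyfun (assign k L) (\<lambda>p. f (m p))"
    unfolding m_def by (rule pf_marg)
  have mds: "\<And>p. m p \<in> dist_space k K" unfolding m_def by (rule marg_ds)
  have mmix: "\<And>\<pi> p q. m (mix \<pi> p q) = mix \<pi> (m p) (m q)"
    unfolding m_def mix_def by (rule marg_lin)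
  have s1: "mix \<pi> (m v1) (m v2) \<in> C" if v1: "v1 \<in> V T1" and v2: "v2 \<in> V T2" for \<pi> v1 v2
  proof -
    have "mix \<pi> v1 v2 \<in> join k L (V T1) (V T2)"
      unfolding joinM M_def
    proof (rule zincl[THEN subsetD])
      show "{mix \<pi> p q |\<pi> p q. p \<in> V T1 \<and> q \<in> V T2} \<subseteq> dist_space k L"
      proof
        fix x assume "x \<in> {mix \<pi> p q |\<pi> p q. p \<in> V T1 \<and> q \<in> V T2}"
        then obtain \<pi>' p q where x: "x = mix \<pi>' p q" "p \<in> V T1" "q \<in> V T2" by blast
        have "p \<in> dist_space k L" "q \<in> dist_space k L"
          using x(2,3) zds trees unfolding L_def V_def model_variety_def by (metis subsetD)+
        then show "x \<in> dist_space k L" unfolding x mix_def dist_space_def by simp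
      qed
    qed (use v1 v2 in blast)
    then have "mix \<pi> v1 v2 \<in> zclosure k L (M (V T3) (V T4))"
      using sub unfolding V_def L_def joinM by blast
    then have "m (mix \<pi> v1 v2) \<in> zclosure k K (m ` M (V T3) (V T4))"
      by (intro zimage[where g=m and L=L] pfm mds)
    moreover have "m ` M (V T3) (V T4) \<subseteq> M (V (restr T3 K)) (V (restr T4 K))"
    proof
      fix x assume "x \<in> m ` M (V T3) (V T4)"
      then obtain \<pi>' u3 u4 where x: "x = m (mix \<pi>' u3 u4)" "u3 \<in> V T3" "u4 \<in> V T4"
        unfolding M_def by blast
      have "m u3 \<in> V (restr T3 K)" using W[OF trees(3)[folded L_def]] x(2) zincl[of "m ` V T3" k K] mds by auto
      moreover have "m u4 \<in> V (restr T4 K)" using W[OF trees(4)[folded L_def]] x(3) zincl[of "m ` V T4" k K] mds by auto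
      ultimately show "x \<in> M (V (restr T3 K)) (V (restr T4 K))"
        unfolding M_def x mmix by blast
    qed
    ultimately show ?thesis unfolding C_def mmix
      using zmono by blast
  qed
  have pfg1: "polyfun I (\<lambda>p. f (mix \<pi> p q))" if "polyfun I f" for I f \<pi> q
  proof -
    have "polyfun I (\<lambda>p. f (\<lambda>\<sigma>. \<pi> * p \<sigma> + (\<lambda>\<sigma>. (1-\<pi>) * q \<sigma>) \<sigma>))"
      by (rule pf_aff[OF that])
    then show ?thesis unfolding mix_def by simp
  qed
  have pfg2: "polyfun I (\<lambda>p. f (mix \<pi> q p))" if "polyfun I f" for I f \<pi> q
  proof -
    have "polyfun I (\<lambda>p. f (\<lambda>\<sigma>. (1-\<pi>) * p \<sigma> + (\<lambda>\<sigma>. \<pi> * q \<sigma>) \<sigma>))"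
      by (rule pf_aff[OF that])
    moreover have "\<And>p. (\<lambda>\<sigma>. (1-\<pi>) * p \<sigma> + (\<lambda>\<sigma>. \<pi> * q \<sigma>) \<sigma>) = mix \<pi> q p"
      unfolding mix_def by (auto simp: add.commute)
    ultimately show ?thesis by simp
  qed
  have dsm: "mix \<pi> p q \<in> dist_space k K" if "p \<in> dist_space k K" "q \<in> dist_space k K" for \<pi> p q
    using that unfolding mix_def dist_space_def by auto
  have Cs: "\<And>S. S \<subseteq> C \<Longrightarrow> zclosure k K S \<subseteq> C"
    unfolding C_def by (rule zsub)
  have W1: "V (restr T1 K) = zclosure k K (m ` V T1)" using W trees(1) L_def by blast
  have W2: "V (restr T2 K) = zclosure k K (m ` V T2)" using W trees(2) L_def by blast
  have s2: "mix \<pi> (m v1) w2 \<in> C" if v1: "v1 \<in> V T1" and w2: "w2 \<in> V (restr T2 K)" for \<pi> v1 w2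
  proof -
    have "mix \<pi> (m v1) w2 \<in> zclosure k K (mix \<pi> (m v1) ` m ` V T2)"
      by (rule zimage[where g="mix \<pi> (m v1)"], rule pfg2, assumption, rule dsm, rule mds, assumption)
         (use w2 W2 in simp)
    also have "\<dots> \<subseteq> C" using s1 v1 by (intro Cs) blast
    finally show ?thesis .
  qed
  have s3: "mix \<pi> w1 w2 \<in> C" if w1: "w1 \<in> V (restr T1 K)" and w2: "w2 \<in> V (restr T2 K)" for \<pi> w1 w2
  proof -
    have w2ds: "w2 \<in> dist_space k K" using w2 zds W2 by blast
    have "mix \<pi> w1 w2 \<in> zclosure k K ((\<lambda>p. mix \<pi> p w2) ` m ` V T1)"
      by (rule zimage[where g="\<lambda>p. mix \<pi> p w2"], rule pfg1, assumption, rule dsm, assumption, rule w2ds)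
         (use w1 W1 in simp)
    also have "\<dots> \<subseteq> C" using s2 w2 by (intro Cs) blast
    finally show ?thesis .
  qed
  have "join k K (V (restr T1 K)) (V (restr T2 K)) \<subseteq> C"
    unfolding joinM M_def using s3 by (intro Cs) blast
  then show False using notsub unfolding C_def joinM V_def by blast
qed

end
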